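(* Let $C\in\mathbb{R}^{N\times N}$ be symmetric positive definite, let $\{1,\dots,N\}=\mathcal S\cup\mathcal S'$ be a partition into disjoint nonempty sets, and let $\Gamma\subset\mathbb{C}$ be a positively oriented simple closed contour with $\Gamma\subset\mathbb{C}\setminus(-\infty,0]$ whose interior contains the spectrum of $C$, and such that $\Gamma$ does not meet the spectra of $C$, $C_{\mathcal S}$, $C_{\mathcal S'}$. For $z\in\Gamma$ set $B(z):=zI-C_{\mathcal S}$, $D(z):=zI-C_{\mathcal S'}$, $H(z):=C_{\mathcal S\mathcal S'}D(z)^{-1}C_{\mathcal S'\mathcal S}$, \[ R_{\mathcal S}(z):=(zI-C_{\mathcal S})^{-1}-\big[(zI-C)^{-1}\big]_{\mathcal S},\qquad \Theta_\Gamma:=\sup_{z\in\Gamma}\|B(z)^{-1}H(z)\|. \] If $\Theta_\Gamma<1$, then for all $z\in\Gamma$, \[ \|R_{\mathcal S}(z)\|\le\frac{\|C_{\mathcal S\mathcal S'}\|^2}{1-\Theta_\Gamma}\,\|B(z)^{-1}\|^2\,\|D(z)^{-1}\|. \]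
   Context: $\|\cdot\|$ is the spectral norm (on complex matrices). $C_{\mathcal S}$, $C_{\mathcal S'}$ are principal submatrices of $C$ on $\mathcal S,\mathcal S'$; $C_{\mathcal S\mathcal S'}$ (resp. $C_{\mathcal S'\mathcal S}$) is the off-diagonal block with rows in $\mathcal S$ and columns in $\mathcal S'$ (resp. vice versa); $[M]_{\mathcal S}$ is the principal submatrix of $M$ on $\mathcal S$. *)

theory Defs
  imports "HOL-Complex_Analysis.Complex_Analysis" "Jordan_Normal_Form.DL_Submatrix"
          "Jordan_Normal_Form.Gauss_Jordan_Elimination" "Jordan_Normal_Form.Char_Poly"
begin

definition cvec_norm :: "complex vec \<Rightarrow> real" where
  "cvec_norm v = sqrt (\<Sum>i<dim_vec v. (cmod (v $ i))\<^sup>2)"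

definition spec_norm :: "complex mat \<Rightarrow> real" where
  "spec_norm A = Sup {cvec_norm (A *\<^sub>v v) | v. v \<in> carrier_vec (dim_col A) \<and> cvec_norm v \<le> 1}"

text \<open>Matrix inverse (used only for invertible square matrices).\<close>
definition minv :: "complex mat \<Rightarrow> complex mat" where
  "minv A = the (mat_inverse A)"

definition spd :: "nat \<Rightarrow> real mat \<Rightarrow> bool" where
  "spd N C \<longleftrightarrow> C \<in> carrier_mat N N \<and> transpose_mat C = C \<and>
     (\<forall>v \<in> carrier_vec N. v \<noteq> 0\<^sub>v N \<longrightarrow> v \<bullet> (C *\<^sub>v v) > 0)"

definition cmat :: "real mat \<Rightarrow> complex mat" where
  "cmat C = map_mat complex_of_real C"

definition psub :: "'a mat \<Rightarrow> nat set \<Rightarrow> 'a mat" where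
  "psub A S = submatrix A S S"

end

theory Submission
  imports Defs
begin

lemma cvec_norm_L2: "cvec_norm v = L2_set (\<lambda>i. cmod (v $ i)) {..<dim_vec v}"
  by (simp add: cvec_norm_def L2_set_def)

lemma cvec_norm_nonneg: "0 \<le> cvec_norm v"
  by (simp add: cvec_norm_L2)

lemma cvec_norm_entry: "i < dim_vec v \<Longrightarrow> cmod (v $ i) \<le> cvec_norm v"
  unfolding cvec_norm_L2 by (rule member_le_L2_set) auto

lemma cvec_norm_add:
  assumes "dim_vec w = dim_vec v"
  shows "cvec_norm (v + w) \<le> cvec_norm v + cvec_norm w"
proof -
  have "cvec_norm (v + w) = L2_set (\<lambda>i. cmod (v $ i + w $ i)) {..<dim_vec v}"
    unfolding cvec_norm_L2 using assms by (intro L2_set_cong) auto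
  also have "\<dots> \<le> L2_set (\<lambda>i. cmod (v $ i) + cmod (w $ i)) {..<dim_vec v}"
    by (intro L2_set_mono) (auto intro: norm_triangle_ineq)
  also have "\<dots> \<le> cvec_norm v + cvec_norm w"
    unfolding cvec_norm_L2 using assms by (simp add: L2_set_triangle_ineq)
  finally show ?thesis .
qed

lemma cvec_norm_smult: "cvec_norm (c \<cdot>\<^sub>v v) = cmod c * cvec_norm v"
  unfolding cvec_norm_L2 by (simp add: L2_set_right_distrib norm_mult, intro L2_set_cong) (auto simp: norm_mult)

lemma cvec_norm_uminus: "cvec_norm (- v) = cvec_norm v"
  unfolding cvec_norm_L2 by (simp, intro L2_set_cong) auto

lemma cvec_norm_zero: "cvec_norm v = 0 \<Longrightarrow> i < dim_vec v \<Longrightarrow> v $ i = 0"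
  using cvec_norm_entry[of i v] by simp

definition fro1 :: "complex mat \<Rightarrow> real" where
  "fro1 A = (\<Sum>i<dim_row A. \<Sum>j<dim_col A. cmod (A $$ (i,j)))"

lemma fro1_nonneg: "0 \<le> fro1 A"
  unfolding fro1_def by (intro sum_nonneg) auto

lemma mult_vec_fro1:
  assumes v: "v \<in> carrier_vec (dim_col A)"
  shows "cvec_norm (A *\<^sub>v v) \<le> fro1 A * cvec_norm v"
proof -
  have "cvec_norm (A *\<^sub>v v) \<le> (\<Sum>i<dim_row A. cmod ((A *\<^sub>v v) $ i))"
    unfolding cvec_norm_L2 dim_mult_mat_vec by (rule L2_set_le_sum) simp
  also have "\<dots> \<le> (\<Sum>i<dim_row A. \<Sum>j<dim_col A. cmod (A $$ (i,j)) * cvec_norm v)"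
  proof (rule sum_mono)
    fix i assume i: "i \<in> {..<dim_row A}"
    have "(A *\<^sub>v v) $ i = (\<Sum>j\<in>{0..<dim_col A}. A $$ (i,j) * v $ j)"
      using i v by (simp add: scalar_prod_def)
    hence "cmod ((A *\<^sub>v v) $ i) \<le> (\<Sum>j\<in>{0..<dim_col A}. cmod (A $$ (i,j) * v $ j))"
      by (simp add: sum_norm_le)
    also have "\<dots> \<le> (\<Sum>j\<in>{0..<dim_col A}. cmod (A $$ (i,j)) * cvec_norm v)"
      using v by (intro sum_mono) (auto simp: norm_mult intro!: mult_left_mono cvec_norm_entry)
    finally show "cmod ((A *\<^sub>v v) $ i) \<le> (\<Sum>j<dim_col A. cmod (A $$ (i,j)) * cvec_norm v)"
      by (simp add: atLeast0LessThan)
  qed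
  also have "\<dots> = fro1 A * cvec_norm v"
    unfolding fro1_def by (simp add: sum_distrib_right)
  finally show ?thesis .
qed

lemma spec_norm_bdd: "bdd_above {cvec_norm (A *\<^sub>v v) | v. v \<in> carrier_vec (dim_col A) \<and> cvec_norm v \<le> 1}"
proof (rule bdd_aboveI)
  fix x assume "x \<in> {cvec_norm (A *\<^sub>v v) | v. v \<in> carrier_vec (dim_col A) \<and> cvec_norm v \<le> 1}"
  then obtain v where v: "v \<in> carrier_vec (dim_col A)" "cvec_norm v \<le> 1" and x: "x = cvec_norm (A *\<^sub>v v)" by auto
  have "x \<le> fro1 A * cvec_norm v" using mult_vec_fro1[OF v(1)] x by simp
  also have "\<dots> \<le> fro1 A" using v(2) fro1_nonneg[of A] by (simp add: mult_left_le)
  finally show "x \<le> fro1 A" .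
qed

lemma spec_norm_upper:
  assumes "v \<in> carrier_vec (dim_col A)" "cvec_norm v \<le> 1"
  shows "cvec_norm (A *\<^sub>v v) \<le> spec_norm A"
  unfolding spec_norm_def by (rule cSup_upper[OF _ spec_norm_bdd]) (use assms in auto)

lemma cvec_norm_zero_vec: "cvec_norm (0\<^sub>v n) = 0"
  unfolding cvec_norm_L2 by (rule L2_set_0') simp

lemma spec_norm_nonneg: "0 \<le> spec_norm A"
  using spec_norm_upper[of "0\<^sub>v (dim_col A)" A] by (simp add: cvec_norm_zero_vec cvec_norm_nonneg order_trans[OF cvec_norm_nonneg])

lemma spec_norm_mult_vec:
  assumes v: "v \<in> carrier_vec (dim_col A)"
  shows "cvec_norm (A *\<^sub>v v) \<le> spec_norm A * cvec_norm v"
proof (cases "cvec_norm v = 0")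
  case True
  have "A *\<^sub>v v = 0\<^sub>v (dim_row A)"
    by (rule eq_vecI) (use True v cvec_norm_zero[OF True] in \<open>auto simp: scalar_prod_def\<close>)
  then show ?thesis using True by (simp add: cvec_norm_zero_vec)
next
  case False
  define n where "n = cvec_norm v"
  have n: "n > 0" using False cvec_norm_nonneg[of v] n_def by simp
  define u where "u = (complex_of_real (1/n)) \<cdot>\<^sub>v v"
  have u: "u \<in> carrier_vec (dim_col A)" using v u_def by simp
  have un: "cvec_norm u = 1" using n unfolding u_def cvec_norm_smult n_def by (simp add: norm_divide)
  have "A *\<^sub>v u = (complex_of_real (1/n)) \<cdot>\<^sub>v (A *\<^sub>v v)"
    unfolding u_def by (rule mult_mat_vec[OF _ v]) (rule carrier_matI[of _ "dim_row A"], simp_all)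
  hence "cvec_norm (A *\<^sub>v u) = cvec_norm (A *\<^sub>v v) / n"
    using n by (simp add: cvec_norm_smult norm_divide)
  with spec_norm_upper[OF u] un have "cvec_norm (A *\<^sub>v v) / n \<le> spec_norm A" by simp
  then show ?thesis using n n_def by (simp add: divide_le_eq mult.commute)
qed

lemma spec_norm_le:
  assumes c: "0 \<le> c" and h: "\<And>v. v \<in> carrier_vec (dim_col A) \<Longrightarrow> cvec_norm (A *\<^sub>v v) \<le> c * cvec_norm v"
  shows "spec_norm A \<le> c"
  unfolding spec_norm_def
proof (rule cSup_least)
  show "{cvec_norm (A *\<^sub>v v) | v. v \<in> carrier_vec (dim_col A) \<and> cvec_norm v \<le> 1} \<noteq> {}"
    using cvec_norm_zero_vec[of "dim_col A"] by (auto intro!: exI[of _ "0\<^sub>v (dim_col A)"])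
  fix x assume "x \<in> {cvec_norm (A *\<^sub>v v) | v. v \<in> carrier_vec (dim_col A) \<and> cvec_norm v \<le> 1}"
  then obtain v where v: "v \<in> carrier_vec (dim_col A)" "cvec_norm v \<le> 1" and x: "x = cvec_norm (A *\<^sub>v v)" by auto
  have "x \<le> c * cvec_norm v" using h[OF v(1)] x by simp
  also have "\<dots> \<le> c" using v(2) c by (simp add: mult_left_le)
  finally show "x \<le> c" .
qed

lemma spec_norm_fro1: "spec_norm A \<le> fro1 A"
  by (rule spec_norm_le[OF fro1_nonneg mult_vec_fro1])

lemma spec_norm_mult:
  fixes A B :: "complex mat"
  assumes A: "A \<in> carrier_mat n m" and B: "B \<in> carrier_mat m k"
  shows "spec_norm (A * B) \<le> spec_norm A * spec_norm B"
proof (rule spec_norm_le)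
  show "0 \<le> spec_norm A * spec_norm B" by (simp add: spec_norm_nonneg)
  fix v :: "complex vec" assume v: "v \<in> carrier_vec (dim_col (A * B))"
  hence v': "v \<in> carrier_vec k" using B by simp
  have "cvec_norm ((A * B) *\<^sub>v v) = cvec_norm (A *\<^sub>v (B *\<^sub>v v))" using A B v' by simp
  also have "\<dots> \<le> spec_norm A * cvec_norm (B *\<^sub>v v)"
    by (rule spec_norm_mult_vec) (use A B v' in auto)
  also have "\<dots> \<le> spec_norm A * (spec_norm B * cvec_norm v)"
    by (intro mult_left_mono spec_norm_mult_vec spec_norm_nonneg) (use B v' in simp)
  finally show "cvec_norm ((A * B) *\<^sub>v v) \<le> spec_norm A * spec_norm B * cvec_norm v" by (simp add: mult.assoc)
qed

lemma spec_norm_add: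
  fixes A B :: "complex mat"
  assumes A: "A \<in> carrier_mat n m" and B: "B \<in> carrier_mat n m"
  shows "spec_norm (A + B) \<le> spec_norm A + spec_norm B"
proof (rule spec_norm_le)
  show "0 \<le> spec_norm A + spec_norm B" by (simp add: spec_norm_nonneg)
  fix v :: "complex vec" assume v: "v \<in> carrier_vec (dim_col (A + B))"
  hence v': "v \<in> carrier_vec m" using B by simp
  have "cvec_norm ((A + B) *\<^sub>v v) = cvec_norm (A *\<^sub>v v + B *\<^sub>v v)"
    using A B v' by (simp add: add_mult_distrib_mat_vec)
  also have "\<dots> \<le> cvec_norm (A *\<^sub>v v) + cvec_norm (B *\<^sub>v v)"
    by (rule cvec_norm_add) (use A B in simp)
  also have "\<dots> \<le> spec_norm A * cvec_norm v + spec_norm B * cvec_norm v"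
    by (intro add_mono spec_norm_mult_vec) (use A B v' in auto)
  finally show "cvec_norm ((A + B) *\<^sub>v v) \<le> (spec_norm A + spec_norm B) * cvec_norm v"
    by (simp add: distrib_right)
qed

lemma spec_norm_uminus: "spec_norm (- A) \<le> spec_norm (A :: complex mat)"
proof (rule spec_norm_le)
  show "0 \<le> spec_norm A" by (simp add: spec_norm_nonneg)
  fix v :: "complex vec" assume v: "v \<in> carrier_vec (dim_col (- A))"
  have "cvec_norm ((- A) *\<^sub>v v) = cvec_norm (A *\<^sub>v v)"
    using v by (simp add: cvec_norm_uminus)
  also have "\<dots> \<le> spec_norm A * cvec_norm v" by (rule spec_norm_mult_vec) (use v in simp)
  finally show "cvec_norm ((- A) *\<^sub>v v) \<le> spec_norm A * cvec_norm v" .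
qed

lemma cvec_norm_sq: "(cvec_norm v)\<^sup>2 = (\<Sum>i<dim_vec v. (cmod (v $ i))\<^sup>2)"
  unfolding cvec_norm_def by (simp add: sum_nonneg)

lemma spec_norm_adj:
  fixes X Y :: "complex mat"
  assumes X: "X \<in> carrier_mat n m" and Y: "Y \<in> carrier_mat m n"
    and XY: "\<And>i j. i < n \<Longrightarrow> j < m \<Longrightarrow> Y $$ (j, i) = cnj (X $$ (i, j))"
  shows "spec_norm Y \<le> spec_norm X"
proof (rule spec_norm_le)
  show "0 \<le> spec_norm X" by (rule spec_norm_nonneg)
  fix w :: "complex vec" assume w: "w \<in> carrier_vec (dim_col Y)"
  hence w': "w \<in> carrier_vec n" using Y by simp
  define u where "u = Y *\<^sub>v w"
  have u: "u \<in> carrier_vec m" using Y w' u_def by simp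
  define v where "v = X *\<^sub>v u"
  have v: "v \<in> carrier_vec n" using X u v_def by simp
  have uj: "u $ j = (\<Sum>i<n. Y $$ (j,i) * w $ i)" if "j < m" for j
    using that Y w' unfolding u_def by (simp add: scalar_prod_def atLeast0LessThan)
  have vi: "v $ i = (\<Sum>j<m. X $$ (i,j) * u $ j)" if "i < n" for i
    using that X u unfolding v_def by (simp add: scalar_prod_def atLeast0LessThan)
  have "complex_of_real ((cvec_norm u)\<^sup>2) = (\<Sum>j<m. cnj (u $ j) * u $ j)"
    unfolding cvec_norm_sq of_real_sum using u by (intro sum.cong) (auto simp del: of_real_power simp: complex_norm_square mult.commute)
  also have "\<dots> = (\<Sum>j<m. \<Sum>i<n. cnj (u $ j) * (Y $$ (j,i) * w $ i))"
    by (intro sum.cong refl) (simp add: uj sum_distrib_left)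
  also have "\<dots> = (\<Sum>i<n. \<Sum>j<m. cnj (u $ j) * (Y $$ (j,i) * w $ i))"
    by (rule sum.swap)
  also have "\<dots> = (\<Sum>i<n. w $ i * cnj (v $ i))"
    by (intro sum.cong refl) (simp add: vi XY sum_distrib_left mult_ac)
  finally have eq: "complex_of_real ((cvec_norm u)\<^sup>2) = (\<Sum>i<n. w $ i * cnj (v $ i))" .
  have "(cvec_norm u)\<^sup>2 = cmod (complex_of_real ((cvec_norm u)\<^sup>2))"
    by (simp only: norm_of_real) simp
  also have "\<dots> \<le> (\<Sum>i<n. \<bar>cmod (w $ i)\<bar> * \<bar>cmod (v $ i)\<bar>)"
    unfolding eq by (rule order_trans[OF norm_sum]) (simp add: norm_mult)
  also have "\<dots> \<le> cvec_norm w * cvec_norm v"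
    unfolding cvec_norm_L2 using w' v L2_set_mult_ineq[of "\<lambda>i. cmod (w $ i)" "\<lambda>i. cmod (v $ i)" "{..<n}"] by simp
  also have "\<dots> \<le> cvec_norm w * (spec_norm X * cvec_norm u)"
    unfolding v_def by (intro mult_left_mono spec_norm_mult_vec cvec_norm_nonneg) (use X u in simp)
  finally have sq: "(cvec_norm u)\<^sup>2 \<le> spec_norm X * cvec_norm w * cvec_norm u" by (simp add: mult_ac)
  show "cvec_norm (Y *\<^sub>v w) \<le> spec_norm X * cvec_norm w"
  proof (cases "cvec_norm u = 0")
    case True thus ?thesis using u_def spec_norm_nonneg[of X] cvec_norm_nonneg[of w] by simp
  next
    case False
    hence "cvec_norm u > 0" using cvec_norm_nonneg[of u] by simp
    with sq have "cvec_norm u \<le> spec_norm X * cvec_norm w"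
      by (simp add: power2_eq_square)
    thus ?thesis using u_def by simp
  qed
qed

lemma pick_bij: assumes "finite S" shows "bij_betw (pick S) {..<card S} S"
proof -
  have inj: "inj_on (pick S) {..<card S}"
  proof (rule inj_onI)
    fix a b assume a: "a \<in> {..<card S}" and b: "b \<in> {..<card S}" and e: "pick S a = pick S b"
    show "a = b"
    proof (rule ccontr)
      assume "a \<noteq> b"
      hence "a < b \<or> b < a" by auto
      moreover have "a < b \<Longrightarrow> pick S a < pick S b" using b by (intro pick_mono) auto
      moreover have "b < a \<Longrightarrow> pick S b < pick S a" using a by (intro pick_mono) auto
      ultimately show False using e by auto
    qed
  qed
  have sub: "pick S ` {..<card S} \<subseteq> S"
  proof
    fix x assume "x \<in> pick S ` {..<card S}"
    then obtain a where "a < card S" "x = pick S a" by auto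
    thus "x \<in> S" using pick_in_set[of a S] by simp
  qed
  have "card (pick S ` {..<card S}) = card S" using card_image[OF inj] by simp
  hence "pick S ` {..<card S} = S" using card_subset_eq[OF assms sub] by simp
  thus ?thesis using inj unfolding bij_betw_def by simp
qed

lemma sum_pick: "finite S \<Longrightarrow> (\<Sum>k<card S. f (pick S k)) = (\<Sum>k\<in>S. f k)"
  using sum.reindex_bij_betw[OF pick_bij] by blast

lemma pick_lt: "finite S \<Longrightarrow> a < card S \<Longrightarrow> pick S a \<in> S"
  using pick_in_set[of a S] by simp

lemma card_sub_set: "S \<subseteq> {0..<N} \<Longrightarrow> {i. i < N \<and> i \<in> S} = S"
  by auto

lemma submatrix_carrier':
  assumes "M \<in> carrier_mat N N'" "I \<subseteq> {0..<N}" "J \<subseteq> {0..<N'}"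
  shows "submatrix M I J \<in> carrier_mat (card I) (card J)"
proof -
  have "{i. i < N \<and> i \<in> I} = I" "{i. i < N' \<and> i \<in> J} = J" using assms(2,3) by auto
  thus ?thesis using assms(1) unfolding carrier_mat_def by (simp add: dim_submatrix)
qed

lemma submatrix_idx:
  assumes "M \<in> carrier_mat N N'" "I \<subseteq> {0..<N}" "J \<subseteq> {0..<N'}" "a < card I" "b < card J"
  shows "submatrix M I J $$ (a,b) = M $$ (pick I a, pick J b)"
proof -
  have "{i. i < N \<and> i \<in> I} = I" "{i. i < N' \<and> i \<in> J} = J" using assms(2,3) by auto
  thus ?thesis using assms by (intro submatrix_index) auto
qed

lemma block_mult:
  fixes M W :: "'a :: comm_ring_1 mat"
  assumes M: "M \<in> carrier_mat N N" and W: "W \<in> carrier_mat N N"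
    and part: "S \<union> S' = {0..<N}" "S \<inter> S' = {}"
    and I: "I \<subseteq> {0..<N}" and J: "J \<subseteq> {0..<N}"
  shows "submatrix M I S * submatrix W S J + submatrix M I S' * submatrix W S' J = submatrix (M * W) I J"
proof -
  have S: "S \<subseteq> {0..<N}" and S': "S' \<subseteq> {0..<N}" using part by auto
  have fS: "finite S" "finite S'" "finite I" "finite J" using S S' I J finite_subset[of _ "{0..<N}"] by auto
  note c1 = submatrix_carrier'[OF M I S] submatrix_carrier'[OF W S J]
    submatrix_carrier'[OF M I S'] submatrix_carrier'[OF W S' J]
  have MW: "M * W \<in> carrier_mat N N" using M W by simp
  note c2 = submatrix_carrier'[OF MW I J]
  show ?thesis
  proof (rule eq_matI)
    fix a b assume "a < dim_row (submatrix (M * W) I J)" "b < dim_col (submatrix (M * W) I J)"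
    hence a: "a < card I" and b: "b < card J" using c2 by auto
    have pa: "pick I a < N" using pick_lt[OF fS(3) a] I by auto
    have pb: "pick J b < N" using pick_lt[OF fS(4) b] I J by auto
    define g where "g k = M $$ (pick I a, k) * W $$ (k, pick J b)" for k
    have e1: "(submatrix M I S * submatrix W S J) $$ (a,b) = (\<Sum>k\<in>S. g k)"
    proof -
      have "(submatrix M I S * submatrix W S J) $$ (a,b) = (\<Sum>k<card S. submatrix M I S $$ (a,k) * submatrix W S J $$ (k,b))"
        using c1 a b by (simp add: scalar_prod_def atLeast0LessThan)
      also have "\<dots> = (\<Sum>k<card S. g (pick S k))"
        by (intro sum.cong refl) (simp add: g_def submatrix_idx[OF M I S a] submatrix_idx[OF W S J _ b])
      finally show ?thesis using sum_pick[OF fS(1)] by simp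
    qed
    have e2: "(submatrix M I S' * submatrix W S' J) $$ (a,b) = (\<Sum>k\<in>S'. g k)"
    proof -
      have "(submatrix M I S' * submatrix W S' J) $$ (a,b) = (\<Sum>k<card S'. submatrix M I S' $$ (a,k) * submatrix W S' J $$ (k,b))"
        using c1 a b by (simp add: scalar_prod_def atLeast0LessThan)
      also have "\<dots> = (\<Sum>k<card S'. g (pick S' k))"
        by (intro sum.cong refl) (simp add: g_def submatrix_idx[OF M I S' a] submatrix_idx[OF W S' J _ b])
      finally show ?thesis using sum_pick[OF fS(2)] by simp
    qed
    have "(\<Sum>k\<in>S. g k) + (\<Sum>k\<in>S'. g k) = (\<Sum>k\<in>{0..<N}. g k)"
      using sum.union_disjoint[OF fS(1) fS(2) part(2), of g] part(1) by simp
    also have "\<dots> = submatrix (M * W) I J $$ (a,b)"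
      using submatrix_idx[OF MW I J a b] pa pb M W by (simp add: g_def scalar_prod_def)
    finally show "(submatrix M I S * submatrix W S J + submatrix M I S' * submatrix W S' J) $$ (a,b) = submatrix (M * W) I J $$ (a,b)"
      using e1 e2 c1 a b by simp
  qed (use c1 c2 in auto)
qed

lemma det_char_nz:
  fixes A :: "complex mat"
  assumes A: "A \<in> carrier_mat n n" and ne: "\<not> eigenvalue A z"
  shows "det (z \<cdot>\<^sub>m 1\<^sub>m n - A) \<noteq> 0"
proof -
  have d: "det (char_matrix A z) \<noteq> 0" using ne eigenvalue_det[OF A] by simp
  have eq: "z \<cdot>\<^sub>m 1\<^sub>m n - A = (-1) \<cdot>\<^sub>m char_matrix A z"
    by (rule eq_matI) (use A in \<open>auto simp: char_matrix_def\<close>)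
  show ?thesis unfolding eq det_smult using d A by simp
qed

lemma minv_props:
  fixes M :: "complex mat"
  assumes M: "M \<in> carrier_mat n n" and d: "det M \<noteq> 0"
  shows "minv M \<in> carrier_mat n n" "M * minv M = 1\<^sub>m n" "minv M * M = 1\<^sub>m n"
proof -
  have u: "M \<in> Units (ring_mat TYPE(complex) n undefined)" by (rule det_non_zero_imp_unit[OF M d])
  obtain B where B: "mat_inverse M = Some B"
  proof (cases "mat_inverse M")
    case None
    with mat_inverse(1)[OF M, of undefined] u show ?thesis by blast
  qed
  from mat_inverse(2)[OF M B] show "minv M \<in> carrier_mat n n" "M * minv M = 1\<^sub>m n" "minv M * M = 1\<^sub>m n"
    unfolding minv_def B by auto
qed

lemma minv_adj:
  fixes M :: "complex mat"
  assumes M: "M \<in> carrier_mat n n" and d: "det M \<noteq> 0"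
  shows "minv M = (1 / det M) \<cdot>\<^sub>m adj_mat M"
proof -
  define Z where "Z = (1 / det M) \<cdot>\<^sub>m adj_mat M"
  have Zc: "Z \<in> carrier_mat n n" using adj_mat(1)[OF M] Z_def by simp
  have "M * Z = (1 / det M) \<cdot>\<^sub>m (M * adj_mat M)"
    unfolding Z_def by (rule mult_smult_distrib[OF M adj_mat(1)[OF M]])
  also have "\<dots> = 1\<^sub>m n" unfolding adj_mat(2)[OF M] by (rule eq_matI) (use d in auto)
  finally have MZ: "M * Z = 1\<^sub>m n" .
  note mp = minv_props[OF M d]
  have "minv M = minv M * (M * Z)" using MZ mp(1) by simp
  also have "\<dots> = (minv M * M) * Z" using mp(1) M Zc by simp
  also have "\<dots> = Z" using mp(3) Zc by simp
  finally show ?thesis unfolding Z_def .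
qed

definition ec :: "complex set \<Rightarrow> nat \<Rightarrow> nat \<Rightarrow> (complex \<Rightarrow> complex mat) \<Rightarrow> bool" where
  "ec T n m f \<longleftrightarrow> (\<forall>z\<in>T. f z \<in> carrier_mat n m) \<and> (\<forall>i<n. \<forall>j<m. continuous_on T (\<lambda>z. f z $$ (i,j)))"

lemma ec_mult:
  assumes f: "ec T n m f" and g: "ec T m k g"
  shows "ec T n k (\<lambda>z. f z * g z)"
  unfolding ec_def
proof (intro conjI ballI allI impI)
  fix z assume "z \<in> T" thus "f z * g z \<in> carrier_mat n k" using f g unfolding ec_def by auto
next
  fix i j assume i: "i < n" and j: "j < k"
  have "continuous_on T (\<lambda>z. \<Sum>l<m. f z $$ (i,l) * g z $$ (l,j))"
    using f g i j unfolding ec_def by (intro continuous_intros) auto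
  moreover have "(f z * g z) $$ (i,j) = (\<Sum>l<m. f z $$ (i,l) * g z $$ (l,j))" if z: "z \<in> T" for z
  proof -
    have "f z \<in> carrier_mat n m" "g z \<in> carrier_mat m k" using f g z unfolding ec_def by auto
    thus ?thesis using i j by (simp add: scalar_prod_def atLeast0LessThan)
  qed
  ultimately show "continuous_on T (\<lambda>z. (f z * g z) $$ (i,j))"
    using continuous_on_cong by (metis (no_types, lifting))
qed

lemma ec_char:
  assumes A: "A \<in> carrier_mat n n"
  shows "ec T n n (\<lambda>z. z \<cdot>\<^sub>m 1\<^sub>m n - A)"
  unfolding ec_def
proof (intro conjI ballI allI impI)
  fix z show "z \<cdot>\<^sub>m 1\<^sub>m n - A \<in> carrier_mat n n" using A unfolding carrier_mat_def by simp
next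
  fix i j assume i: "i < n" and j: "j < n"
  have "continuous_on T (\<lambda>z. (if i = j then z else 0) - A $$ (i,j))"
    by (cases "i = j") (simp_all add: continuous_intros)
  moreover have "\<And>z. (z \<cdot>\<^sub>m 1\<^sub>m n - A) $$ (i,j) = (if i = j then z else 0) - A $$ (i,j)"
    using A i j by auto
  ultimately show "continuous_on T (\<lambda>z. (z \<cdot>\<^sub>m 1\<^sub>m n - A) $$ (i,j))" by simp
qed

lemma ec_const:
  assumes A: "A \<in> carrier_mat n m"
  shows "ec T n m (\<lambda>z. A)"
  using A unfolding ec_def by auto

lemma ec_det:
  assumes f: "ec T n n f"
  shows "continuous_on T (\<lambda>z. det (f z))"
proof -
  have "continuous_on T (\<lambda>z. \<Sum>p \<in> {p. p permutes {0 ..< n}}. signof p * (\<Prod>i = 0 ..< n. f z $$ (i, p i)))"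
  proof (intro continuous_intros)
    fix p i assume "p \<in> {p. p permutes {0 ..< n}}" "i \<in> {0..<n}"
    hence "i < n" "p i < n" using permutes_in_image by fastforce+
    thus "continuous_on T (\<lambda>z. f z $$ (i, p i))" using f unfolding ec_def by auto
  qed
  moreover have "\<And>z. z \<in> T \<Longrightarrow> det (f z) = (\<Sum>p \<in> {p. p permutes {0 ..< n}}. signof p * (\<Prod>i = 0 ..< n. f z $$ (i, p i)))"
    using f unfolding ec_def by (auto intro: det_def')
  ultimately show ?thesis using continuous_on_cong by (metis (no_types, lifting))
qed

lemma ec_delete:
  assumes f: "ec T (Suc n) (Suc n) f"
  shows "ec T n n (\<lambda>z. mat_delete (f z) a b)"
  unfolding ec_def
proof (intro conjI ballI allI impI)
  fix z assume z: "z \<in> T"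
  have fz: "f z \<in> carrier_mat (Suc n) (Suc n)" using f z unfolding ec_def by blast
  show "mat_delete (f z) a b \<in> carrier_mat n n"
    using mat_delete_carrier[OF fz, of a b] by simp
next
  fix i j assume i: "i < n" and j: "j < n"
  define i' where "i' = (if i < a then i else Suc i)"
  define j' where "j' = (if j < b then j else Suc j)"
  have i': "i' < Suc n" and j': "j' < Suc n" using i j unfolding i'_def j'_def by auto
  have "continuous_on T (\<lambda>z. f z $$ (i', j'))"
    using f i' j' unfolding ec_def by blast
  moreover have "mat_delete (f z) a b $$ (i,j) = f z $$ (i', j')" if z: "z \<in> T" for z
  proof -
    have fz: "f z \<in> carrier_mat (Suc n) (Suc n)" using f z unfolding ec_def by blast
    hence "dim_row (f z) = Suc n" "dim_col (f z) = Suc n" by auto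
    thus ?thesis using i j unfolding mat_delete_def i'_def j'_def by simp
  qed
  ultimately show "continuous_on T (\<lambda>z. mat_delete (f z) a b $$ (i,j))"
    using continuous_on_cong by (metis (no_types, lifting))
qed

lemma ec_minv:
  assumes f: "ec T n n f" and d: "\<forall>z\<in>T. det (f z) \<noteq> 0"
  shows "ec T n n (\<lambda>z. minv (f z))"
  unfolding ec_def
proof (intro conjI ballI allI impI)
  fix z assume "z \<in> T" thus "minv (f z) \<in> carrier_mat n n"
    using f d minv_props(1) unfolding ec_def by blast
next
  fix i j assume i: "i < n" and j: "j < n"
  then obtain n' where n: "n = Suc n'" by (cases n) auto
  have c1: "continuous_on T (\<lambda>z. det (f z))" by (rule ec_det[OF f])
  have f': "ec T (Suc n') (Suc n') f" using f n by simp
  have c2: "continuous_on T (\<lambda>z. det (mat_delete (f z) j i))" by (rule ec_det[OF ec_delete[OF f']])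
  have c3: "continuous_on T (\<lambda>z. 1 / det (f z))" by (rule continuous_on_divide[OF continuous_on_const c1]) (use d in auto)
  have "continuous_on T (\<lambda>z. (1 / det (f z)) * ((-1)^(j+i) * det (mat_delete (f z) j i)))"
    by (rule continuous_on_mult[OF c3 continuous_on_mult[OF continuous_on_const c2]])
  moreover have "\<And>z. z \<in> T \<Longrightarrow> minv (f z) $$ (i,j) = (1 / det (f z)) * ((-1)^(j+i) * det (mat_delete (f z) j i))"
  proof -
    fix z assume z: "z \<in> T"
    have fz: "f z \<in> carrier_mat n n" using f z unfolding ec_def by auto
    show "minv (f z) $$ (i,j) = (1 / det (f z)) * ((-1)^(j+i) * det (mat_delete (f z) j i))"
      unfolding minv_adj[OF fz d[rule_format, OF z]] using fz i j
      by (simp add: adj_mat_def cofactor_def)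
  qed
  ultimately show "continuous_on T (\<lambda>z. minv (f z) $$ (i,j))"
    using continuous_on_cong by (metis (no_types, lifting))
qed

lemma ec_bdd:
  assumes f: "ec T n m f" and T: "compact T"
  shows "\<exists>B. \<forall>z\<in>T. spec_norm (f z) \<le> B"
proof -
  have c: "continuous_on T (\<lambda>z. \<Sum>i<n. \<Sum>j<m. cmod (f z $$ (i,j)))"
    using f unfolding ec_def by (intro continuous_intros) auto
  have "compact ((\<lambda>z. \<Sum>i<n. \<Sum>j<m. cmod (f z $$ (i,j))) ` T)"
    by (rule compact_continuous_image[OF c T])
  hence "bounded ((\<lambda>z. \<Sum>i<n. \<Sum>j<m. cmod (f z $$ (i,j))) ` T)" by (rule compact_imp_bounded)
  then obtain B where B: "\<And>x. x \<in> (\<lambda>z. \<Sum>i<n. \<Sum>j<m. cmod (f z $$ (i,j))) ` T \<Longrightarrow> norm x \<le> B"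
    unfolding bounded_iff by blast
  show ?thesis
  proof (intro exI ballI)
    fix z assume z: "z \<in> T"
    have fz: "f z \<in> carrier_mat n m" using f z unfolding ec_def by auto
    have "spec_norm (f z) \<le> fro1 (f z)" by (rule spec_norm_fro1)
    also have "\<dots> = (\<Sum>i<n. \<Sum>j<m. cmod (f z $$ (i,j)))" using fz by (simp add: fro1_def)
    also have "\<dots> \<le> B" using B[of "\<Sum>i<n. \<Sum>j<m. cmod (f z $$ (i,j))"] z by auto
    finally show "spec_norm (f z) \<le> B" .
  qed
qed

lemma add_neg_eq:
  fixes A B C :: "'a :: ab_group_add mat"
  assumes "A \<in> carrier_mat n m" "B \<in> carrier_mat n m" "C \<in> carrier_mat n m" "A + (- B) = C"
  shows "A = C + B"
proof (rule eq_matI)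
  fix i j assume "i < dim_row (C + B)" "j < dim_col (C + B)"
  hence ij: "i < n" "j < m" using assms by auto
  have "(A + (- B)) $$ (i,j) = C $$ (i,j)" using assms(4) by simp
  moreover have "(A + (- B)) $$ (i,j) = A $$ (i,j) - B $$ (i,j)" using assms(1,2) ij by simp
  ultimately show "A $$ (i,j) = (C + B) $$ (i,j)" using assms(2,3) ij by (simp add: algebra_simps)
qed (use assms in auto)

lemma neg_add_eq:
  fixes A B :: "'a :: ab_group_add mat"
  assumes "A \<in> carrier_mat n m" "B \<in> carrier_mat n m" "(- A) + B = 0\<^sub>m n m"
  shows "B = A"
proof (rule eq_matI)
  fix i j assume "i < dim_row A" "j < dim_col A"
  hence ij: "i < n" "j < m" using assms by auto
  have "((- A) + B) $$ (i,j) = 0\<^sub>m n m $$ (i,j)" using assms(3) by simp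
  moreover have "((- A) + B) $$ (i,j) = - A $$ (i,j) + B $$ (i,j)" using assms(1,2) ij by simp
  ultimately show "B $$ (i,j) = A $$ (i,j)" using ij by (simp add: algebra_simps)
qed (use assms in auto)

lemma sub_eq_neg:
  fixes A B C :: "'a :: ab_group_add mat"
  assumes "A \<in> carrier_mat n m" "B \<in> carrier_mat n m" "C \<in> carrier_mat n m" "A = B + C"
  shows "B - A = - C"
proof (rule eq_matI)
  fix i j assume "i < dim_row (- C)" "j < dim_col (- C)"
  hence ij: "i < n" "j < m" using assms by auto
  show "(B - A) $$ (i,j) = (- C) $$ (i,j)" using assms ij by simp
qed (use assms in auto)

lemma main_pt:
  fixes CC :: "complex mat" and z :: complex and Th :: real
  assumes CC: "CC \<in> carrier_mat N N"
    and herm: "\<And>a b. a < N \<Longrightarrow> b < N \<Longrightarrow> CC $$ (b, a) = cnj (CC $$ (a, b))"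
    and part: "S \<union> S' = {0..<N}" "S \<inter> S' = {}"
    and dM: "det (z \<cdot>\<^sub>m 1\<^sub>m N - CC) \<noteq> 0"
    and dB: "det (z \<cdot>\<^sub>m 1\<^sub>m (card S) - psub CC S) \<noteq> 0"
    and dD: "det (z \<cdot>\<^sub>m 1\<^sub>m (card S') - psub CC S') \<noteq> 0"
    and th: "spec_norm (minv (z \<cdot>\<^sub>m 1\<^sub>m (card S) - psub CC S) *
                  (submatrix CC S S' * minv (z \<cdot>\<^sub>m 1\<^sub>m (card S') - psub CC S') *
                   submatrix CC S' S)) \<le> Th"
    and Th1: "Th < 1"
  shows "spec_norm (minv (z \<cdot>\<^sub>m 1\<^sub>m (card S) - psub CC S)
                - psub (minv (z \<cdot>\<^sub>m 1\<^sub>m N - CC)) S)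
     \<le> (spec_norm (submatrix CC S S'))\<^sup>2 / (1 - Th)
        * (spec_norm (minv (z \<cdot>\<^sub>m 1\<^sub>m (card S) - psub CC S)))\<^sup>2
        * spec_norm (minv (z \<cdot>\<^sub>m 1\<^sub>m (card S') - psub CC S'))"
proof -
  define n where "n = card S"
  define n' where "n' = card S'"
  have Ssub: "S \<subseteq> {0..<N}" "S' \<subseteq> {0..<N}" using part by auto
  have fin: "finite S" "finite S'" using Ssub finite_subset[of _ "{0..<N}"] by auto
  have injS: "inj_on (pick S) {..<n}" unfolding n_def by (rule bij_betw_imp_inj_on[OF pick_bij[OF fin(1)]])
  have injS': "inj_on (pick S') {..<n'}" unfolding n'_def by (rule bij_betw_imp_inj_on[OF pick_bij[OF fin(2)]])
  have pS: "pick S a \<in> S" if "a < n" for a using that unfolding n_def by (rule pick_lt[OF fin(1)])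
  have pS': "pick S' a \<in> S'" if "a < n'" for a using that unfolding n'_def by (rule pick_lt[OF fin(2)])
  have pSN: "pick S a < N" if "a < n" for a using subsetD[OF Ssub(1) pS[OF that]] by simp
  have pSN': "pick S' a < N" if "a < n'" for a using subsetD[OF Ssub(2) pS'[OF that]] by simp
  have dis: "pick S a \<noteq> pick S' b" if "a < n" "b < n'" for a b
    using pS[OF that(1)] pS'[OF that(2)] part(2) by (metis IntI empty_iff)
  have injS2: "a < n \<Longrightarrow> b < n \<Longrightarrow> pick S a = pick S b \<longleftrightarrow> a = b" for a b
    using inj_on_eq_iff[OF injS, of a b] by simp
  have injS2': "a < n' \<Longrightarrow> b < n' \<Longrightarrow> pick S' a = pick S' b \<longleftrightarrow> a = b" for a b
    using inj_on_eq_iff[OF injS', of a b] by simp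
  define M where "M = z \<cdot>\<^sub>m 1\<^sub>m N - CC"
  have Mc: "M \<in> carrier_mat N N" using CC unfolding M_def carrier_mat_def by simp
  define W where "W = minv M"
  note Wp = minv_props[OF Mc dM[folded M_def], folded W_def]
  define Bz where "Bz = z \<cdot>\<^sub>m 1\<^sub>m n - psub CC S"
  define Dz where "Dz = z \<cdot>\<^sub>m 1\<^sub>m n' - psub CC S'"
  define X where "X = submatrix CC S S'"
  define Y where "Y = submatrix CC S' S"
  have PS: "psub CC S \<in> carrier_mat n n" unfolding psub_def n_def by (rule submatrix_carrier'[OF CC Ssub(1) Ssub(1)])
  have PS': "psub CC S' \<in> carrier_mat n' n'" unfolding psub_def n'_def by (rule submatrix_carrier'[OF CC Ssub(2) Ssub(2)])
  have Xc: "X \<in> carrier_mat n n'" unfolding X_def n_def n'_def by (rule submatrix_carrier'[OF CC Ssub(1) Ssub(2)])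
  have Yc: "Y \<in> carrier_mat n' n" unfolding Y_def n_def n'_def by (rule submatrix_carrier'[OF CC Ssub(2) Ssub(1)])
  have Bzc: "Bz \<in> carrier_mat n n" using PS unfolding Bz_def carrier_mat_def by simp
  have Dzc: "Dz \<in> carrier_mat n' n'" using PS' unfolding Dz_def carrier_mat_def by simp
  define Bi where "Bi = minv Bz"
  define Di where "Di = minv Dz"
  note Bp = minv_props[OF Bzc dB[folded n_def, folded Bz_def], folded Bi_def]
  note Dp = minv_props[OF Dzc dD[folded n'_def, folded Dz_def], folded Di_def]
  define Ws where "Ws = submatrix W S S"
  define Wt where "Wt = submatrix W S' S"
  have Wsc: "Ws \<in> carrier_mat n n" unfolding Ws_def n_def by (rule submatrix_carrier'[OF Wp(1) Ssub(1) Ssub(1)])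
  have Wtc: "Wt \<in> carrier_mat n' n" unfolding Wt_def n_def n'_def by (rule submatrix_carrier'[OF Wp(1) Ssub(2) Ssub(1)])
  have Bz_eq: "submatrix M S S = Bz"
  proof (rule eq_matI)
    fix a b assume "a < dim_row Bz" "b < dim_col Bz"
    hence a: "a < n" and b: "b < n" using Bzc by auto
    show "submatrix M S S $$ (a,b) = Bz $$ (a,b)"
      using submatrix_idx[OF Mc Ssub(1) Ssub(1), of a b] submatrix_idx[OF CC Ssub(1) Ssub(1), of a b]
        a b n_def pSN[OF a] pSN[OF b] injS2[OF a b] CC PS
      unfolding M_def Bz_def psub_def by simp
  qed (use Bzc submatrix_carrier'[OF Mc Ssub(1) Ssub(1)] n_def in auto)
  have Dz_eq: "submatrix M S' S' = Dz"
  proof (rule eq_matI)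
    fix a b assume "a < dim_row Dz" "b < dim_col Dz"
    hence a: "a < n'" and b: "b < n'" using Dzc by auto
    show "submatrix M S' S' $$ (a,b) = Dz $$ (a,b)"
      using submatrix_idx[OF Mc Ssub(2) Ssub(2), of a b] submatrix_idx[OF CC Ssub(2) Ssub(2), of a b]
        a b n'_def pSN'[OF a] pSN'[OF b] injS2'[OF a b] CC PS'
      unfolding M_def Dz_def psub_def by simp
  qed (use Dzc submatrix_carrier'[OF Mc Ssub(2) Ssub(2)] n'_def in auto)
  have X_eq: "submatrix M S S' = - X"
  proof (rule eq_matI)
    fix a b assume "a < dim_row (- X)" "b < dim_col (- X)"
    hence a: "a < n" and b: "b < n'" using Xc by auto
    show "submatrix M S S' $$ (a,b) = (- X) $$ (a,b)"
      using submatrix_idx[OF Mc Ssub(1) Ssub(2), of a b] submatrix_idx[OF CC Ssub(1) Ssub(2), of a b]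
        a b n_def n'_def pSN[OF a] pSN'[OF b] dis[OF a b] CC Xc
      unfolding M_def X_def by simp
  qed (use Xc submatrix_carrier'[OF Mc Ssub(1) Ssub(2)] n_def n'_def in auto)
  have Y_eq: "submatrix M S' S = - Y"
  proof (rule eq_matI)
    fix a b assume "a < dim_row (- Y)" "b < dim_col (- Y)"
    hence a: "a < n'" and b: "b < n" using Yc by auto
    show "submatrix M S' S $$ (a,b) = (- Y) $$ (a,b)"
      using submatrix_idx[OF Mc Ssub(2) Ssub(1), of a b] submatrix_idx[OF CC Ssub(2) Ssub(1), of a b]
        a b n_def n'_def pSN'[OF a] pSN[OF b] dis[OF b a] CC Yc
      unfolding M_def Y_def by simp
  qed (use Yc submatrix_carrier'[OF Mc Ssub(2) Ssub(1)] n_def n'_def in auto)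
  have one1: "submatrix (1\<^sub>m N :: complex mat) S S = 1\<^sub>m n"
  proof (rule eq_matI)
    fix a b assume "a < dim_row (1\<^sub>m n :: complex mat)" "b < dim_col (1\<^sub>m n :: complex mat)"
    hence a: "a < n" and b: "b < n" by auto
    show "submatrix (1\<^sub>m N :: complex mat) S S $$ (a,b) = (1\<^sub>m n :: complex mat) $$ (a,b)"
      using submatrix_idx[OF one_carrier_mat Ssub(1) Ssub(1), of a b] a b n_def pSN[OF a] pSN[OF b] injS2[OF a b]
      by simp
  qed (use submatrix_carrier'[OF one_carrier_mat Ssub(1) Ssub(1)] n_def in auto)
  have one2: "submatrix (1\<^sub>m N :: complex mat) S' S = 0\<^sub>m n' n"
  proof (rule eq_matI)
    fix a b assume "a < dim_row (0\<^sub>m n' n :: complex mat)" "b < dim_col (0\<^sub>m n' n :: complex mat)"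
    hence a: "a < n'" and b: "b < n" by auto
    show "submatrix (1\<^sub>m N :: complex mat) S' S $$ (a,b) = (0\<^sub>m n' n :: complex mat) $$ (a,b)"
      using submatrix_idx[OF one_carrier_mat Ssub(2) Ssub(1), of a b] a b n_def n'_def pSN'[OF a] pSN[OF b] dis[OF b a]
      by simp
  qed (use submatrix_carrier'[OF one_carrier_mat Ssub(2) Ssub(1)] n_def n'_def in auto)
  have blk1: "Bz * Ws + (- X) * Wt = 1\<^sub>m n"
    using block_mult[OF Mc Wp(1) part Ssub(1) Ssub(1)] Wp(2) one1
    unfolding Bz_eq X_eq Ws_def Wt_def by simp
  have blk2: "(- Y) * Ws + Dz * Wt = 0\<^sub>m n' n"
    using block_mult[OF Mc Wp(1) part Ssub(2) Ssub(1)] Wp(2) one2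
    unfolding Dz_eq Y_eq Ws_def Wt_def by simp
  have E1: "Bz * Ws = 1\<^sub>m n + X * Wt"
  proof -
    have "(- X) * Wt = - (X * Wt)" using Xc Wtc by simp
    with blk1 have "Bz * Ws + - (X * Wt) = 1\<^sub>m n" by simp
    moreover have "Bz * Ws \<in> carrier_mat n n" "X * Wt \<in> carrier_mat n n" using Bzc Wsc Xc Wtc by auto
    ultimately show ?thesis using add_neg_eq[of "Bz * Ws" n n "X * Wt" "1\<^sub>m n"] by simp
  qed
  have E2: "Dz * Wt = Y * Ws"
  proof -
    have "(- Y) * Ws = - (Y * Ws)" using Yc Wsc by simp
    with blk2 have "- (Y * Ws) + Dz * Wt = 0\<^sub>m n' n" by simp
    moreover have "Y * Ws \<in> carrier_mat n' n" "Dz * Wt \<in> carrier_mat n' n" using Dzc Wsc Yc Wtc by auto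
    ultimately show ?thesis using neg_add_eq[of "Y * Ws" n' n "Dz * Wt"] by simp
  qed
  have Wt_eq: "Wt = Di * (Y * Ws)"
  proof -
    have "Wt = (Di * Dz) * Wt" using Dp Wtc by simp
    also have "\<dots> = Di * (Dz * Wt)" by (rule assoc_mult_mat[OF Dp(1) Dzc Wtc])
    finally show ?thesis unfolding E2 .
  qed
  define K where "K = Bi * (X * Di * Y)"
  have Kc: "K \<in> carrier_mat n n" using Bp Xc Dp Yc unfolding K_def by simp
  have Ws_eq: "Ws = Bi + K * Ws"
  proof -
    have "Ws = (Bi * Bz) * Ws" using Bp Wsc by simp
    also have "\<dots> = Bi * (Bz * Ws)" by (rule assoc_mult_mat[OF Bp(1) Bzc Wsc])
    also have "\<dots> = Bi * 1\<^sub>m n + Bi * (X * Wt)" unfolding E1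
      by (rule mult_add_distrib_mat[OF Bp(1)]) (use Xc Wtc in auto)
    also have "Bi * (X * Wt) = K * Ws"
    proof -
      have "K * Ws = Bi * ((X * Di * Y) * Ws)" unfolding K_def using Bp Xc Dp Yc Wsc
        by (intro assoc_mult_mat[of _ n n]) auto
      also have "(X * Di * Y) * Ws = (X * Di) * (Y * Ws)" using Xc Dp Yc Wsc
        by (intro assoc_mult_mat[of _ n n']) auto
      also have "\<dots> = X * (Di * (Y * Ws))" using Xc Dp Yc Wsc
        by (intro assoc_mult_mat[of _ n n']) auto
      finally show ?thesis unfolding Wt_eq by simp
    qed
    finally show ?thesis using Bp by simp
  qed
  have R_eq: "Bi - Ws = - (K * Ws)"
    by (rule sub_eq_neg[OF Wsc Bp(1) _ Ws_eq]) (use Kc Wsc in simp)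
  define a where "a = spec_norm Bi"
  define x where "x = spec_norm X"
  define d where "d = spec_norm Di"
  define w where "w = spec_norm Ws"
  define t where "t = spec_norm K"
  have a0: "0 \<le> a" and x0: "0 \<le> x" and d0: "0 \<le> d" and w0: "0 \<le> w" and t0: "0 \<le> t"
    unfolding a_def x_def d_def w_def t_def by (simp_all add: spec_norm_nonneg)
  have tT: "t \<le> Th" using th unfolding t_def K_def Bi_def Bz_def Di_def Dz_def X_def Y_def n_def n'_def .
  have y: "spec_norm Y \<le> x" unfolding x_def
  proof (rule spec_norm_adj[OF Xc Yc])
    fix i j assume i: "i < n" and j: "j < n'"
    have "Y $$ (j,i) = CC $$ (pick S' j, pick S i)"
      unfolding Y_def by (rule submatrix_idx[OF CC Ssub(2) Ssub(1)]) (use i j n_def n'_def in auto)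
    also have "\<dots> = cnj (CC $$ (pick S i, pick S' j))" by (rule herm[OF pSN[OF i] pSN'[OF j]])
    also have "CC $$ (pick S i, pick S' j) = X $$ (i,j)"
      unfolding X_def by (rule submatrix_idx[OF CC Ssub(1) Ssub(2), symmetric]) (use i j n_def n'_def in auto)
    finally show "Y $$ (j,i) = cnj (X $$ (i,j))" .
  qed
  have Kn: "t \<le> a * (x * d * x)"
  proof -
    have XD: "X * Di \<in> carrier_mat n n'" using Xc Dp(1) by (meson mult_carrier_mat)
    have XDY: "X * Di * Y \<in> carrier_mat n n" using XD Yc by (meson mult_carrier_mat)
    have "t \<le> a * spec_norm (X * Di * Y)" unfolding t_def a_def K_def
      by (rule spec_norm_mult[OF Bp(1) XDY])
    also have "spec_norm (X * Di * Y) \<le> spec_norm (X * Di) * spec_norm Y"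
      by (rule spec_norm_mult[OF XD Yc])
    also have "\<dots> \<le> (x * d) * x"
    proof (rule mult_mono)
      show "spec_norm (X * Di) \<le> x * d" unfolding x_def d_def by (rule spec_norm_mult[OF Xc Dp(1)])
    qed (use y x0 d0 spec_norm_nonneg in auto)
    finally show ?thesis using a0 by (simp add: mult_left_mono)
  qed
  have KWs: "spec_norm (K * Ws) \<le> t * w" unfolding t_def w_def by (rule spec_norm_mult[OF Kc Wsc])
  have wle: "w \<le> a + t * w"
  proof -
    have "w = spec_norm (Bi + K * Ws)" unfolding w_def using Ws_eq by simp
    also have "\<dots> \<le> a + spec_norm (K * Ws)" unfolding a_def
      by (rule spec_norm_add[of _ n n]) (use Bp Kc Wsc in auto)
    finally show ?thesis using KWs by simp
  qed
  have wle2: "w \<le> a / (1 - Th)"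
  proof -
    have "w * (1 - Th) \<le> w * (1 - t)" using tT w0 by (simp add: mult_left_mono)
    also have "\<dots> \<le> a" using wle by (simp add: algebra_simps)
    finally show ?thesis using Th1 by (simp add: pos_le_divide_eq)
  qed
  have "spec_norm (Bi - Ws) \<le> t * w"
    unfolding R_eq using spec_norm_uminus[of "K * Ws"] KWs by simp
  also have "\<dots> \<le> (a * (x * d * x)) * (a / (1 - Th))"
    by (rule mult_mono[OF Kn wle2]) (use a0 x0 d0 w0 in simp_all)
  also have "\<dots> = x\<^sup>2 / (1 - Th) * a\<^sup>2 * d" by (simp add: power2_eq_square field_simps)
  finally show ?thesis
    unfolding a_def x_def d_def Bi_def Bz_def Di_def Dz_def X_def n_def n'_def Ws_def W_def M_def psub_def .
qed

theorem lemma4: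
  fixes N :: nat and C :: "real mat" and S S' :: "nat set" and \<gamma> :: "real \<Rightarrow> complex"
  assumes spd: "spd N C"
    and part: "S \<union> S' = {0..<N}" "S \<inter> S' = {}" "S \<noteq> {}" "S' \<noteq> {}"
    and contour: "valid_path \<gamma>" "simple_path \<gamma>" "pathfinish \<gamma> = pathstart \<gamma>"
    and slit: "path_image \<gamma> \<subseteq> - complex_of_real ` {..0}"
    and pos_orient: "\<forall>w \<in> inside (path_image \<gamma>). winding_number \<gamma> w = 1"
    and spec_inside: "\<forall>e. eigenvalue (cmat C) e \<longrightarrow> e \<in> inside (path_image \<gamma>)"
    and avoid: "\<forall>z \<in> path_image \<gamma>. \<not> eigenvalue (cmat C) z \<and>
                   \<not> eigenvalue (psub (cmat C) S) z \<and> \<not> eigenvalue (psub (cmat C) S') z"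
    and Theta: "Sup ((\<lambda>z. spec_norm (minv (z \<cdot>\<^sub>m 1\<^sub>m (card S) - psub (cmat C) S) *
                  (submatrix (cmat C) S S' * minv (z \<cdot>\<^sub>m 1\<^sub>m (card S') - psub (cmat C) S') *
                   submatrix (cmat C) S' S))) ` path_image \<gamma>) < 1"
  shows "\<forall>z \<in> path_image \<gamma>.
     spec_norm (minv (z \<cdot>\<^sub>m 1\<^sub>m (card S) - psub (cmat C) S)
                - psub (minv (z \<cdot>\<^sub>m 1\<^sub>m N - cmat C)) S)
     \<le> (spec_norm (submatrix (cmat C) S S'))\<^sup>2
        / (1 - Sup ((\<lambda>z. spec_norm (minv (z \<cdot>\<^sub>m 1\<^sub>m (card S) - psub (cmat C) S) *
                  (submatrix (cmat C) S S' * minv (z \<cdot>\<^sub>m 1\<^sub>m (card S') - psub (cmat C) S') *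
                   submatrix (cmat C) S' S))) ` path_image \<gamma>))
        * (spec_norm (minv (z \<cdot>\<^sub>m 1\<^sub>m (card S) - psub (cmat C) S)))\<^sup>2
        * spec_norm (minv (z \<cdot>\<^sub>m 1\<^sub>m (card S') - psub (cmat C) S'))"
proof
  fix z assume zT: "z \<in> path_image \<gamma>"
  define CC where "CC = cmat C"
  have C: "C \<in> carrier_mat N N" and Cs: "transpose_mat C = C" using spd unfolding spd_def by auto
  have CC: "CC \<in> carrier_mat N N" using C unfolding CC_def cmat_def by simp
  have herm: "CC $$ (b,a) = cnj (CC $$ (a,b))" if ab: "a < N" "b < N" for a b
  proof -
    have "transpose_mat C $$ (a,b) = C $$ (a,b)" using Cs by simp
    hence "C $$ (b,a) = C $$ (a,b)" using ab C by simp
    thus ?thesis using ab C unfolding CC_def cmat_def by simp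
  qed
  have Ssub: "S \<subseteq> {0..<N}" "S' \<subseteq> {0..<N}" using part by auto
  have PS: "psub CC S \<in> carrier_mat (card S) (card S)" unfolding psub_def by (rule submatrix_carrier'[OF CC Ssub(1) Ssub(1)])
  have PS': "psub CC S' \<in> carrier_mat (card S') (card S')" unfolding psub_def by (rule submatrix_carrier'[OF CC Ssub(2) Ssub(2)])
  have Xc: "submatrix CC S S' \<in> carrier_mat (card S) (card S')" by (rule submatrix_carrier'[OF CC Ssub(1) Ssub(2)])
  have Yc: "submatrix CC S' S \<in> carrier_mat (card S') (card S)" by (rule submatrix_carrier'[OF CC Ssub(2) Ssub(1)])
  have dB: "\<forall>w\<in>path_image \<gamma>. det (w \<cdot>\<^sub>m 1\<^sub>m (card S) - psub CC S) \<noteq> 0"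
    using avoid det_char_nz[OF PS] unfolding CC_def by blast
  have dD: "\<forall>w\<in>path_image \<gamma>. det (w \<cdot>\<^sub>m 1\<^sub>m (card S') - psub CC S') \<noteq> 0"
    using avoid det_char_nz[OF PS'] unfolding CC_def by blast
  have dM: "det (z \<cdot>\<^sub>m 1\<^sub>m N - CC) \<noteq> 0"
    using avoid zT det_char_nz[OF CC] unfolding CC_def by blast
  define K where "K w = minv (w \<cdot>\<^sub>m 1\<^sub>m (card S) - psub CC S) *
     (submatrix CC S S' * minv (w \<cdot>\<^sub>m 1\<^sub>m (card S') - psub CC S') * submatrix CC S' S)" for w
  have e1: "ec (path_image \<gamma>) (card S) (card S) (\<lambda>w. minv (w \<cdot>\<^sub>m 1\<^sub>m (card S) - psub CC S))"
    by (rule ec_minv[OF ec_char[OF PS] dB])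
  have e2: "ec (path_image \<gamma>) (card S') (card S') (\<lambda>w. minv (w \<cdot>\<^sub>m 1\<^sub>m (card S') - psub CC S'))"
    by (rule ec_minv[OF ec_char[OF PS'] dD])
  have e3: "ec (path_image \<gamma>) (card S) (card S') (\<lambda>w. submatrix CC S S' * minv (w \<cdot>\<^sub>m 1\<^sub>m (card S') - psub CC S'))"
    by (rule ec_mult[OF ec_const[OF Xc] e2])
  have e4: "ec (path_image \<gamma>) (card S) (card S) (\<lambda>w. submatrix CC S S' * minv (w \<cdot>\<^sub>m 1\<^sub>m (card S') - psub CC S') * submatrix CC S' S)"
    by (rule ec_mult[OF e3 ec_const[OF Yc]])
  have ecK: "ec (path_image \<gamma>) (card S) (card S) K"
    unfolding K_def by (rule ec_mult[OF e1 e4])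
  have cT: "compact (path_image \<gamma>)" by (rule compact_path_image[OF valid_path_imp_path[OF contour(1)]])
  obtain Bd where Bd: "\<forall>w\<in>path_image \<gamma>. spec_norm (K w) \<le> Bd" using ec_bdd[OF ecK cT] by blast
  have bdd: "bdd_above ((\<lambda>w. spec_norm (K w)) ` path_image \<gamma>)"
    by (rule bdd_aboveI2[of _ _ Bd]) (use Bd in blast)
  have th: "spec_norm (K z) \<le> Sup ((\<lambda>w. spec_norm (K w)) ` path_image \<gamma>)"
    by (rule cSup_upper[OF imageI[OF zT] bdd])
  have Th1: "Sup ((\<lambda>w. spec_norm (K w)) ` path_image \<gamma>) < 1"
    using Theta unfolding K_def CC_def .
  show "spec_norm (minv (z \<cdot>\<^sub>m 1\<^sub>m (card S) - psub (cmat C) S)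
                - psub (minv (z \<cdot>\<^sub>m 1\<^sub>m N - cmat C)) S)
     \<le> (spec_norm (submatrix (cmat C) S S'))\<^sup>2
        / (1 - Sup ((\<lambda>z. spec_norm (minv (z \<cdot>\<^sub>m 1\<^sub>m (card S) - psub (cmat C) S) *
                  (submatrix (cmat C) S S' * minv (z \<cdot>\<^sub>m 1\<^sub>m (card S') - psub (cmat C) S') *
                   submatrix (cmat C) S' S))) ` path_image \<gamma>))
        * (spec_norm (minv (z \<cdot>\<^sub>m 1\<^sub>m (card S) - psub (cmat C) S)))\<^sup>2
        * spec_norm (minv (z \<cdot>\<^sub>m 1\<^sub>m (card S') - psub (cmat C) S'))"
    using main_pt[OF CC herm part(1,2) dM dB[rule_format, OF zT] dD[rule_format, OF zT] th[unfolded K_def] Th1[unfolded K_def]]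
    unfolding CC_def .
qed

end
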